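(* Let $(\theta_1,\theta_2)$ be as in the context and satisfy (A3). For any $k\in[\underline{\theta}_1,\overline{\theta}_1]$, the problem \[\max_{p_A,p_R\,:\,p_A\ge p_R}\ \mathbb{E}\big[\psi(\theta_1,\theta_2)\big(\mathbf{1}_{\theta_1\ge k}\mathbf{1}_{\theta_2\ge p_A}+\mathbf{1}_{\theta_1<k}\mathbf{1}_{\theta_2\ge p_R}\big)\big]-\mathbb{E}\big[(\theta_2-p_R)_+\mid\theta_1=\underline{\theta}_1\big]\] has an optimal solution with $p_A=p_R$.
   Context: $\theta_1\in[\underline{\theta}_1,\overline{\theta}_1]\subset\mathbb{R}_+$ has an absolutely continuous distribution $F_1$ with density $f_1>0$ on that interval; $\theta_2\in[\underline{\theta}_2,\overline{\theta}_2]\subset\mathbb{R}_+$ has conditional distribution $F_2(\theta_2\mid\theta_1)$, continuously differentiable in $(\theta_1,\theta_2)$ with conditional density $f_2(\theta_2\mid\theta_1)$. Impulse response $I(\theta_1,\theta_2)=-\frac{\partial F_2(\theta_2\mid\theta_1)/\partial\theta_1}{f_2(\theta_2\mid\theta_1)}$; second-period virtual value $\psi(\theta_1,\theta_2)=\theta_2-\frac{1-F_1(\theta_1)}{f_1(\theta_1)}I(\theta_1,\theta_2)$. (A3) Regularity: $\psi$ is non-decreasing in both $\theta_1$ and $\theta_2$. $(y)_+=\max\{y,0\}$. *)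

theory Defs
  imports "HOL-Analysis.Analysis"
begin

definition cdf1 :: "(real \<Rightarrow> real) \<Rightarrow> real \<Rightarrow> real \<Rightarrow> real" where
  "cdf1 f1 a1 t = integral {a1..t} f1"

text \<open>Impulse response  I(t1,t2) = - (dF2(t2|t1)/dt1) / f2(t2|t1);
  D1F2 t1 t2 is the partial derivative of F2(t2|t1) w.r.t. t1,
  f2 t1 t2 the conditional density f2(t2|t1).\<close>
definition impulse :: "(real \<Rightarrow> real \<Rightarrow> real) \<Rightarrow> (real \<Rightarrow> real \<Rightarrow> real) \<Rightarrow> real \<Rightarrow> real \<Rightarrow> real" where
  "impulse D1F2 f2 t1 t2 = - D1F2 t1 t2 / f2 t1 t2"

definition vvalue :: "(real \<Rightarrow> real) \<Rightarrow> real \<Rightarrow> (real \<Rightarrow> real \<Rightarrow> real) \<Rightarrow> (real \<Rightarrow> real \<Rightarrow> real)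
    \<Rightarrow> real \<Rightarrow> real \<Rightarrow> real" where
  "vvalue f1 a1 D1F2 f2 t1 t2 = t2 - (1 - cdf1 f1 a1 t1) / f1 t1 * impulse D1F2 f2 t1 t2"

definition expect :: "(real \<Rightarrow> real) \<Rightarrow> (real \<Rightarrow> real \<Rightarrow> real) \<Rightarrow> real \<Rightarrow> real \<Rightarrow> real \<Rightarrow> real
    \<Rightarrow> (real \<Rightarrow> real \<Rightarrow> real) \<Rightarrow> real" where
  "expect f1 f2 a1 b1 a2 b2 g =
     integral {a1..b1} (\<lambda>t1. integral {a2..b2} (\<lambda>t2. g t1 t2 * f2 t1 t2) * f1 t1)"

definition cond_expect_at :: "(real \<Rightarrow> real \<Rightarrow> real) \<Rightarrow> real \<Rightarrow> real \<Rightarrow> real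
    \<Rightarrow> (real \<Rightarrow> real) \<Rightarrow> real" where
  "cond_expect_at f2 t1 a2 b2 h = integral {a2..b2} (\<lambda>t2. h t2 * f2 t1 t2)"

definition objective :: "(real \<Rightarrow> real) \<Rightarrow> (real \<Rightarrow> real \<Rightarrow> real) \<Rightarrow> (real \<Rightarrow> real \<Rightarrow> real)
    \<Rightarrow> real \<Rightarrow> real \<Rightarrow> real \<Rightarrow> real \<Rightarrow> real \<Rightarrow> real \<Rightarrow> real \<Rightarrow> real" where
  "objective f1 D1F2 f2 a1 b1 a2 b2 k pA pR =
     expect f1 f2 a1 b1 a2 b2
       (\<lambda>t1 t2. vvalue f1 a1 D1F2 f2 t1 t2 *
          ((if k \<le> t1 then 1 else 0) * (if pA \<le> t2 then 1 else 0)
           + (if t1 < k then 1 else 0) * (if pR \<le> t2 then 1 else 0)))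
     - cond_expect_at f2 a1 a2 b2 (\<lambda>t2. max (t2 - pR) 0)"

end

theory Submission
  imports Defs
begin

lemma slice:
  fixes G :: "real \<times> real \<Rightarrow> real"
  assumes [measurable]: "G \<in> borel_measurable borel" and bnd: "\<And>z. \<bar>G z\<bar> \<le> B" and ab: "a \<le> b"
  shows "((\<lambda>t2. G (t1,t2)) has_integral (\<integral>t2. indicator {a..b} t2 * G (t1,t2) \<partial>lborel)) {a..b}"
proof -
  have "integrable lborel (\<lambda>t2. indicator {a..b} t2 *\<^sub>R G (t1,t2))"
    by (rule integrableI_bounded_set_indicator[where B=B]) (use ab bnd in auto)
  then have "((\<lambda>t2. indicator {a..b} t2 * G (t1,t2)) has_integral (\<integral>t2. indicator {a..b} t2 * G (t1,t2) \<partial>lborel)) UNIV"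
    using has_integral_integral_lborel by auto
  then have "((\<lambda>t2. if t2 \<in> {a..b} then G (t1,t2) else 0) has_integral (\<integral>t2. indicator {a..b} t2 * G (t1,t2) \<partial>lborel)) UNIV"
    by (rule has_integral_eq[rotated]) (simp add: indicator_def)
  then show ?thesis using has_integral_restrict_UNIV[of "{a..b}" "\<lambda>t2. G (t1,t2)"] by blast
qed

lemma slice_meas:
  fixes G :: "real \<times> real \<Rightarrow> real"
  assumes [measurable]: "G \<in> borel_measurable borel"
  shows "(\<lambda>t1. \<integral>t2. indicator {a..b} t2 * G (t1,t2) \<partial>lborel) \<in> borel_measurable (lebesgue_on S)"
proof -
  have "(\<lambda>(t1,t2). indicator {a..b} t2 * G (t1,t2)) \<in> borel_measurable (lborel \<Otimes>\<^sub>M lborel)"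
  proof -
    have [measurable]: "G \<in> borel_measurable (borel \<Otimes>\<^sub>M borel)" by (simp add: borel_prod)
    have "(\<lambda>z. indicator {a..b} (snd z) * G z) \<in> borel_measurable (borel \<Otimes>\<^sub>M borel)" by measurable
    then have "(\<lambda>z. indicator {a..b} (snd z) * G z) \<in> borel_measurable borel" by (simp add: borel_prod)
    moreover have "(\<lambda>(t1,t2). indicator {a..b} t2 * G (t1,t2)) = (\<lambda>z. indicator {a..b} (snd z) * G z)" by auto
    ultimately show ?thesis unfolding lborel_prod by simp
  qed
  then have "(\<lambda>t1. \<integral>t2. indicator {a..b} t2 * G (t1,t2) \<partial>lborel) \<in> borel_measurable lborel"
    using lborel.borel_measurable_lebesgue_integral[of "\<lambda>t1 t2. indicator {a..b} t2 * G (t1,t2)" lborel] by simp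
  then show ?thesis by (simp add: measurable_completion measurable_restrict_space1)
qed

locale cfg =
  fixes a1 b1 a2 b2 k :: real and f1 :: "real \<Rightarrow> real" and D1F2 f2 :: "real \<Rightarrow> real \<Rightarrow> real"
  assumes a1b1: "a1 < b1" and a2_nonneg: "0 \<le> a2" and a2b2: "a2 < b2"
    and f1_pos: "\<forall>t\<in>{a1..b1}. 0 < f1 t"
    and f1_density: "(f1 has_integral 1) {a1..b1}"
    and D1F2_cont: "continuous_on ({a1..b1} \<times> {a2..b2}) (\<lambda>(x, y). D1F2 x y)"
    and f2_cont: "continuous_on ({a1..b1} \<times> {a2..b2}) (\<lambda>(x, y). f2 x y)"
    and f2_nonneg: "\<forall>t1\<in>{a1..b1}. \<forall>t2\<in>{a2..b2}. 0 \<le> f2 t1 t2"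
    and A3_mono1: "\<forall>t1\<in>{a1..b1}. \<forall>t1'\<in>{a1..b1}. \<forall>t2\<in>{a2..b2}.
        t1 \<le> t1' \<longrightarrow> vvalue f1 a1 D1F2 f2 t1 t2 \<le> vvalue f1 a1 D1F2 f2 t1' t2"
    and A3_mono2: "\<forall>t1\<in>{a1..b1}. \<forall>t2\<in>{a2..b2}. \<forall>t2'\<in>{a2..b2}.
        t2 \<le> t2' \<longrightarrow> vvalue f1 a1 D1F2 f2 t1 t2 \<le> vvalue f1 a1 D1F2 f2 t1 t2'"
    and k_range: "k \<in> {a1..b1}"
begin

definition "psi t1 t2 = vvalue f1 a1 D1F2 f2 t1 t2"
definition "h t1 t2 = psi t1 t2 * f2 t1 t2"
definition "F1 t = cdf1 f1 a1 t"
definition "Phi t1 p = integral {a2..b2} (\<lambda>t2. indicator {p..} t2 * h t1 t2)"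
definition "W t1 p = Phi t1 p * f1 t1"
definition "H p = cond_expect_at f2 a1 a2 b2 (\<lambda>t2. max (t2 - p) 0)"
definition "Dv p = integral {a1..b1} (\<lambda>t1. W t1 p) - H p"
definition "P t1 p = integral {a2..b2} (\<lambda>t2. indicator {p..} t2 * (t2 * f2 t1 t2))"
definition "Q t1 p = integral {a2..b2} (\<lambda>t2. indicator {p..} t2 * (D1F2 t1 t2 / f2 t1 t2 * f2 t1 t2))"
definition "R = {a1..b1} \<times> {a2..b2}"
definition "fR z = indicator R z *\<^sub>R (\<lambda>(x, y). f2 x y) z"
definition "DR z = indicator R z *\<^sub>R (\<lambda>(x, y). D1F2 x y) z"

lemma f1_int: "f1 integrable_on {a1..b1}"
  using f1_density by blast

lemma F1_bounds:
  assumes t: "t \<in> {a1..b1}" shows "0 \<le> F1 t" "F1 t \<le> 1"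
proof -
  have i1: "f1 integrable_on {a1..t}" by (rule integrable_on_subinterval[OF f1_int]) (use t in auto)
  have i2: "f1 integrable_on {t..b1}" by (rule integrable_on_subinterval[OF f1_int]) (use t in auto)
  have n1: "0 \<le> integral {a1..t} f1" using i1 t by (intro integral_nonneg) (auto intro!: less_imp_le[OF f1_pos[rule_format]])
  have n2: "0 \<le> integral {t..b1} f1" using i2 t by (intro integral_nonneg) (auto intro!: less_imp_le[OF f1_pos[rule_format]])
  have "integral {a1..t} f1 + integral {t..b1} f1 = integral {a1..b1} f1"
    by (rule Henstock_Kurzweil_Integration.integral_combine) (use t f1_int in auto)
  also have "\<dots> = 1" using f1_density by (rule integral_unique)
  finally show "0 \<le> F1 t" "F1 t \<le> 1" using n1 n2 by (auto simp: F1_def cdf1_def)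
qed

lemma F1_cont: "continuous_on {a1..b1} F1"
  unfolding F1_def cdf1_def[abs_def] by (rule indefinite_integral_continuous_1[OF f1_int])

lemma bound_exists: "\<exists>M. \<forall>x\<in>{a1..b1}. \<forall>y\<in>{a2..b2}. \<bar>f2 x y\<bar> \<le> M \<and> \<bar>D1F2 x y\<bar> \<le> M"
proof -
  have c: "compact ({a1..b1} \<times> {a2..b2})" by (intro compact_Times) auto
  have "bounded ((\<lambda>(x, y). f2 x y) ` ({a1..b1} \<times> {a2..b2}))"
    by (intro compact_imp_bounded compact_continuous_image f2_cont c)
  then obtain M1 where M1: "\<forall>z\<in>({a1..b1} \<times> {a2..b2}). \<bar>(\<lambda>(x, y). f2 x y) z\<bar> \<le> M1"
    unfolding bounded_real by auto
  have "bounded ((\<lambda>(x, y). D1F2 x y) ` ({a1..b1} \<times> {a2..b2}))"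
    by (intro compact_imp_bounded compact_continuous_image D1F2_cont c)
  then obtain M2 where M2: "\<forall>z\<in>({a1..b1} \<times> {a2..b2}). \<bar>(\<lambda>(x, y). D1F2 x y) z\<bar> \<le> M2"
    unfolding bounded_real by auto
  show ?thesis
  proof (rule exI[of _ "max M1 M2"], intro ballI)
    fix x y assume xy: "x \<in> {a1..b1}" "y \<in> {a2..b2}"
    then show "\<bar>f2 x y\<bar> \<le> max M1 M2 \<and> \<bar>D1F2 x y\<bar> \<le> max M1 M2"
    proof -
      have "\<bar>f2 x y\<bar> \<le> M1" using M1[rule_format, OF SigmaI[OF xy]] by simp
      moreover have "\<bar>D1F2 x y\<bar> \<le> M2" using M2[rule_format, OF SigmaI[OF xy]] by simp
      ultimately show ?thesis by linarith
    qed
  qed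
qed

lemma h_gen: "(t2 - c * ((- d) / f)) * f = t2 * f + c * (d / f * f)" for t2 c d f :: real
  by (simp add: distrib_right mult.assoc)

lemma h_eq: "h t1 t2 = t2 * f2 t1 t2 + (1 - F1 t1) / f1 t1 * (D1F2 t1 t2 / f2 t1 t2 * f2 t1 t2)"
  unfolding h_def psi_def vvalue_def impulse_def F1_def by (rule h_gen)

lemma Dq_abs: "\<bar>D1F2 t1 t2 / f2 t1 t2 * f2 t1 t2\<bar> \<le> \<bar>D1F2 t1 t2\<bar>"
proof (cases "f2 t1 t2 = 0")
  case False
  then have "D1F2 t1 t2 / f2 t1 t2 * f2 t1 t2 = D1F2 t1 t2" by simp
  then show ?thesis by simp
qed simp

lemma R_closed: "closed R" unfolding R_def by (intro closed_Times) auto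

lemma fR_meas[measurable]: "fR \<in> borel_measurable borel"
  unfolding fR_def[abs_def] using R_closed f2_cont
  by (intro borel_measurable_continuous_on_indicator) (auto simp: R_def)

lemma DR_meas[measurable]: "DR \<in> borel_measurable borel"
  unfolding DR_def[abs_def] using R_closed D1F2_cont
  by (intro borel_measurable_continuous_on_indicator) (auto simp: R_def)


lemma snd_meas[measurable]: "(snd :: real \<times> real \<Rightarrow> real) \<in> borel_measurable borel"
  by (metis borel_prod measurable_snd)

definition "M = (SOME M. \<forall>x\<in>{a1..b1}. \<forall>y\<in>{a2..b2}. \<bar>f2 x y\<bar> \<le> M \<and> \<bar>D1F2 x y\<bar> \<le> M)"

lemma M_bnd: assumes "x \<in> {a1..b1}" "y \<in> {a2..b2}" shows "\<bar>f2 x y\<bar> \<le> M" "\<bar>D1F2 x y\<bar> \<le> M"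
  using someI_ex[OF bound_exists] assms unfolding M_def[symmetric] by auto

lemma M_nonneg: "0 \<le> M"
  using M_bnd(1)[of a1 a2] a1b1 a2b2 by auto

definition "GP p z = indicator {p..} (snd z) * (snd z * fR z)"
definition "GQ p z = indicator {p..} (snd z) * (DR z / fR z * fR z)"

lemma GP_meas[measurable]: "GP p \<in> borel_measurable borel"
  unfolding GP_def[abs_def] by measurable

lemma GQ_meas[measurable]: "GQ p \<in> borel_measurable borel"
  unfolding GQ_def[abs_def] by measurable

lemma GP_bnd: "\<bar>GP p z\<bar> \<le> b2 * M"
proof (cases "z \<in> R")
  case True
  then obtain x y where z: "z = (x,y)" "x \<in> {a1..b1}" "y \<in> {a2..b2}" unfolding R_def by auto
  have "\<bar>y * f2 x y\<bar> \<le> b2 * M"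
    using M_bnd(1)[OF z(2,3)] z(3) a2_nonneg by (auto simp: abs_mult intro!: mult_mono)
  moreover have "0 \<le> b2 * M" using M_nonneg a2_nonneg a2b2 by simp
  ultimately show ?thesis using z True by (auto simp: GP_def fR_def indicator_def abs_mult)
next
  case False
  then show ?thesis using M_nonneg a2_nonneg a2b2 by (auto simp: GP_def fR_def)
qed

lemma GQ_bnd: "\<bar>GQ p z\<bar> \<le> M"
proof (cases "z \<in> R")
  case True
  then obtain x y where z: "z = (x,y)" "x \<in> {a1..b1}" "y \<in> {a2..b2}" unfolding R_def by auto
  have "\<bar>D1F2 x y / f2 x y * f2 x y\<bar> \<le> M"
    using M_bnd(2)[OF z(2,3)] Dq_abs[of x y] by linarith
  then show ?thesis using z True by (auto simp: GQ_def fR_def DR_def indicator_def abs_mult)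
next
  case False
  then show ?thesis using M_nonneg by (auto simp: GQ_def fR_def)
qed

lemma P_has:
  assumes t1: "t1 \<in> {a1..b1}"
  shows "((\<lambda>t2. indicator {p..} t2 * (t2 * f2 t1 t2)) has_integral
           (\<integral>t2. indicator {a2..b2} t2 * GP p (t1,t2) \<partial>lborel)) {a2..b2}"
proof -
  have "((\<lambda>t2. GP p (t1,t2)) has_integral (\<integral>t2. indicator {a2..b2} t2 * GP p (t1,t2) \<partial>lborel)) {a2..b2}"
    using a2b2 by (intro slice[where B="b2 * M"] GP_meas GP_bnd) auto
  then show ?thesis
    by (rule has_integral_eq[rotated]) (use t1 in \<open>auto simp: GP_def fR_def R_def\<close>)
qed

lemma Q_has:
  assumes t1: "t1 \<in> {a1..b1}"
  shows "((\<lambda>t2. indicator {p..} t2 * (D1F2 t1 t2 / f2 t1 t2 * f2 t1 t2)) has_integral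
           (\<integral>t2. indicator {a2..b2} t2 * GQ p (t1,t2) \<partial>lborel)) {a2..b2}"
proof -
  have "((\<lambda>t2. GQ p (t1,t2)) has_integral (\<integral>t2. indicator {a2..b2} t2 * GQ p (t1,t2) \<partial>lborel)) {a2..b2}"
    using a2b2 by (intro slice[where B="M"] GQ_meas GQ_bnd) auto
  then show ?thesis
    by (rule has_integral_eq[rotated]) (use t1 in \<open>auto simp: GQ_def fR_def DR_def R_def\<close>)
qed

lemma P_has': "t1 \<in> {a1..b1} \<Longrightarrow> ((\<lambda>t2. indicator {p..} t2 * (t2 * f2 t1 t2)) has_integral P t1 p) {a2..b2}"
  unfolding P_def by (rule integrable_integral) (use P_has in blast)

lemma Q_has': "t1 \<in> {a1..b1} \<Longrightarrow> ((\<lambda>t2. indicator {p..} t2 * (D1F2 t1 t2 / f2 t1 t2 * f2 t1 t2)) has_integral Q t1 p) {a2..b2}"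
  unfolding Q_def by (rule integrable_integral) (use Q_has in blast)

lemma P_meas: "(\<lambda>t1. P t1 p) \<in> borel_measurable (lebesgue_on {a1..b1})"
proof -
  have m: "(\<lambda>t1. \<integral>t2. indicator {a2..b2} t2 * GP p (t1,t2) \<partial>lborel) \<in> borel_measurable (lebesgue_on {a1..b1})"
    by (rule slice_meas) simp
  have eq: "P t1 p = (\<integral>t2. indicator {a2..b2} t2 * GP p (t1,t2) \<partial>lborel)" if "t1 \<in> {a1..b1}" for t1
    by (rule has_integral_unique[OF P_has'[OF that] P_has[OF that]])
  show ?thesis
    using measurable_lebesgue_cong[of "{a1..b1}" "\<lambda>t1. P t1 p" "\<lambda>t1. \<integral>t2. indicator {a2..b2} t2 * GP p (t1,t2) \<partial>lborel"] eq m
    by blast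
qed

lemma Q_meas: "(\<lambda>t1. Q t1 p) \<in> borel_measurable (lebesgue_on {a1..b1})"
proof -
  have m: "(\<lambda>t1. \<integral>t2. indicator {a2..b2} t2 * GQ p (t1,t2) \<partial>lborel) \<in> borel_measurable (lebesgue_on {a1..b1})"
    by (rule slice_meas) simp
  have eq: "Q t1 p = (\<integral>t2. indicator {a2..b2} t2 * GQ p (t1,t2) \<partial>lborel)" if "t1 \<in> {a1..b1}" for t1
    by (rule has_integral_unique[OF Q_has'[OF that] Q_has[OF that]])
  show ?thesis
    using measurable_lebesgue_cong[of "{a1..b1}" "\<lambda>t1. Q t1 p" "\<lambda>t1. \<integral>t2. indicator {a2..b2} t2 * GQ p (t1,t2) \<partial>lborel"] eq m
    by blast
qed

lemma P_bnd: "t1 \<in> {a1..b1} \<Longrightarrow> \<bar>P t1 p\<bar> \<le> b2 * M * (b2 - a2)"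
proof -
  assume t1: "t1 \<in> {a1..b1}"
  have "norm (P t1 p) \<le> b2 * M * Henstock_Kurzweil_Integration.content {a2..b2}"
  proof (rule has_integral_bound_real[OF _ _ P_has'[OF t1], where S="{}"])
    show "0 \<le> b2 * M" using M_nonneg a2_nonneg a2b2 by simp
    fix x assume x: "x \<in> {a2..b2} - {}"
    have "\<bar>x * f2 t1 x\<bar> \<le> b2 * M"
      using M_bnd(1)[OF t1, of x] x a2_nonneg by (auto simp: abs_mult intro!: mult_mono)
    then show "norm (indicator {p..} x * (x * f2 t1 x)) \<le> b2 * M"
      using M_nonneg a2_nonneg a2b2 by (auto simp: indicator_def)
  qed auto
  then show ?thesis using a2b2 by simp
qed

lemma Q_bnd: "t1 \<in> {a1..b1} \<Longrightarrow> \<bar>Q t1 p\<bar> \<le> M * (b2 - a2)"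
proof -
  assume t1: "t1 \<in> {a1..b1}"
  have "norm (Q t1 p) \<le> M * Henstock_Kurzweil_Integration.content {a2..b2}"
  proof (rule has_integral_bound_real[OF _ _ Q_has'[OF t1], where S="{}"])
    show "0 \<le> M" using M_nonneg by simp
    fix x assume x: "x \<in> {a2..b2} - {}"
    have "\<bar>D1F2 t1 x / f2 t1 x * f2 t1 x\<bar> \<le> M"
      using M_bnd(2)[OF t1, of x] x Dq_abs[of t1 x] by auto
    then show "norm (indicator {p..} x * (D1F2 t1 x / f2 t1 x * f2 t1 x)) \<le> M"
      using M_nonneg by (auto simp: indicator_def)
  qed auto
  then show ?thesis using a2b2 by simp
qed


lemma Phi_has:
  assumes t1: "t1 \<in> {a1..b1}"
  shows "((\<lambda>t2. indicator {p..} t2 * h t1 t2) has_integral (P t1 p + (1 - F1 t1) / f1 t1 * Q t1 p)) {a2..b2}"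
proof -
  have "((\<lambda>t2. indicator {p..} t2 * (t2 * f2 t1 t2) + (1 - F1 t1) / f1 t1 * (indicator {p..} t2 * (D1F2 t1 t2 / f2 t1 t2 * f2 t1 t2)))
      has_integral (P t1 p + (1 - F1 t1) / f1 t1 * Q t1 p)) {a2..b2}"
    by (intro has_integral_add P_has'[OF t1] has_integral_mult_right Q_has'[OF t1])
  then show ?thesis
    by (rule has_integral_eq[rotated]) (simp only: h_eq distrib_left mult.left_commute)
qed

lemma Phi_eq: "t1 \<in> {a1..b1} \<Longrightarrow> Phi t1 p = P t1 p + (1 - F1 t1) / f1 t1 * Q t1 p"
  unfolding Phi_def by (rule integral_unique[OF Phi_has])

lemma Phi_int: "t1 \<in> {a1..b1} \<Longrightarrow> (\<lambda>t2. indicator {p..} t2 * h t1 t2) integrable_on {a2..b2}"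
  using Phi_has by blast

lemma W_eq: "t1 \<in> {a1..b1} \<Longrightarrow> W t1 p = f1 t1 * P t1 p + (1 - F1 t1) * Q t1 p"
proof -
  assume t1: "t1 \<in> {a1..b1}"
  then have "f1 t1 \<noteq> 0" using f1_pos by (metis less_irrefl)
  then show ?thesis using t1 by (simp add: W_def Phi_eq field_simps)
qed

lemma f1_meas: "f1 \<in> borel_measurable (lebesgue_on {a1..b1})"
  by (rule integrable_imp_measurable[OF f1_int])

lemma F1_meas: "F1 \<in> borel_measurable (lebesgue_on {a1..b1})"
  by (rule continuous_imp_measurable_on_sets_lebesgue[OF F1_cont]) auto

lemma W_meas: "(\<lambda>t1. W t1 p) \<in> borel_measurable (lebesgue_on {a1..b1})"
proof -
  have m: "(\<lambda>t1. f1 t1 * P t1 p + (1 - F1 t1) * Q t1 p) \<in> borel_measurable (lebesgue_on {a1..b1})"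
    using f1_meas F1_meas P_meas Q_meas
    by (intro borel_measurable_add borel_measurable_times borel_measurable_diff) auto
  show ?thesis
    using measurable_lebesgue_cong[of "{a1..b1}" "\<lambda>t1. W t1 p" "\<lambda>t1. f1 t1 * P t1 p + (1 - F1 t1) * Q t1 p"] W_eq m
    by blast
qed

definition "C1 = b2 * M * (b2 - a2)"
definition "C2 = M * (b2 - a2)"

lemma W_bnd: assumes t1: "t1 \<in> {a1..b1}" shows "\<bar>W t1 p\<bar> \<le> f1 t1 * C1 + C2"
proof -
  have f: "0 < f1 t1" using f1_pos t1 by auto
  have "\<bar>f1 t1 * P t1 p\<bar> \<le> f1 t1 * C1"
    using P_bnd[OF t1, of p] f by (auto simp: abs_mult C1_def intro!: mult_left_mono)
  moreover have "\<bar>(1 - F1 t1) * Q t1 p\<bar> \<le> C2"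
  proof -
    have "\<bar>(1 - F1 t1) * Q t1 p\<bar> \<le> 1 * \<bar>Q t1 p\<bar>"
      unfolding abs_mult using F1_bounds[OF t1] by (intro mult_right_mono) auto
    then show ?thesis using Q_bnd[OF t1, of p] by (simp add: C2_def)
  qed
  ultimately show ?thesis using W_eq[OF t1] by (simp add: abs_triangle_ineq order_trans[OF abs_triangle_ineq])
qed

lemma bnd_int: "(\<lambda>t1. f1 t1 * C1 + C2) integrable_on {a1..b1}"
  by (intro integrable_add integrable_on_mult_left f1_int integrable_const_ivl)

lemma int_by_bnd:
  assumes "u \<in> borel_measurable (lebesgue_on {a1..b1})" "\<And>t1. t1 \<in> {a1..b1} \<Longrightarrow> \<bar>u t1\<bar> \<le> f1 t1 * C1 + C2"
  shows "u integrable_on {a1..b1}"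
proof -
  have "u absolutely_integrable_on {a1..b1}"
    by (rule measurable_bounded_by_integrable_imp_absolutely_integrable[OF assms(1) _ bnd_int]) (use assms(2) in auto)
  then show ?thesis using absolutely_integrable_on_def by blast
qed

lemma W_int: "(\<lambda>t1. W t1 p) integrable_on {a1..b1}"
  by (rule int_by_bnd[OF W_meas W_bnd])

lemma V_int: "(\<lambda>t1. if k \<le> t1 then W t1 pA else W t1 pR) integrable_on {a1..b1}"
proof (rule int_by_bnd)
  have i: "(\<lambda>t::real. indicator {k..} t :: real) \<in> borel_measurable (lebesgue_on {a1..b1})"
  proof -
    have "(\<lambda>t::real. indicator {k..} t :: real) \<in> borel_measurable borel" by measurable
    then show ?thesis by (simp add: measurable_completion measurable_restrict_space1)
  qed
  have "(\<lambda>t1. W t1 pR + indicator {k..} t1 * (W t1 pA - W t1 pR)) \<in> borel_measurable (lebesgue_on {a1..b1})"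
    using W_meas i by (intro borel_measurable_add borel_measurable_times borel_measurable_diff) auto
  moreover have "(\<lambda>t1. W t1 pR + indicator {k..} t1 * (W t1 pA - W t1 pR)) = (\<lambda>t1. if k \<le> t1 then W t1 pA else W t1 pR)"
    by (auto simp: indicator_def)
  ultimately show "(\<lambda>t1. if k \<le> t1 then W t1 pA else W t1 pR) \<in> borel_measurable (lebesgue_on {a1..b1})" by simp
  show "\<And>t1. t1 \<in> {a1..b1} \<Longrightarrow> \<bar>if k \<le> t1 then W t1 pA else W t1 pR\<bar> \<le> f1 t1 * C1 + C2"
    using W_bnd by auto
qed


lemma f1_nn: "t \<in> {a1..b1} \<Longrightarrow> 0 \<le> f1 t"
  using f1_pos less_imp_le by blast

lemma h_int: "t1 \<in> {a1..b1} \<Longrightarrow> h t1 integrable_on {a2..b2}"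
  by (rule integrable_eq[OF Phi_int[of t1 a2]]) (auto simp: indicator_def)

lemma Phi_interval: "t1 \<in> {a1..b1} \<Longrightarrow> a2 \<le> p \<Longrightarrow> Phi t1 p = integral {p..b2} (h t1)"
proof -
  assume "a2 \<le> p"
  have "Phi t1 p = integral {a2..b2} (\<lambda>t2. if t2 \<in> {p..} then h t1 t2 else 0)"
    unfolding Phi_def by (rule arg_cong[where f="integral _"]) (auto simp: indicator_def)
  also have "\<dots> = integral ({p..} \<inter> {a2..b2}) (h t1)"
    by (rule Henstock_Kurzweil_Integration.integral_restrict_Int)
  also have "{p..} \<inter> {a2..b2} = {p..b2}" using \<open>a2 \<le> p\<close> by auto
  finally show ?thesis .
qed

lemma Phi_diff:
  assumes t1: "t1 \<in> {a1..b1}" and pq: "a2 \<le> p" "p \<le> q" "q \<le> b2"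
  shows "Phi t1 p - Phi t1 q = integral {p..q} (h t1)"
proof -
  have i: "h t1 integrable_on {p..b2}"
    by (rule integrable_on_subinterval[OF h_int[OF t1]]) (use pq in auto)
  have "integral {p..q} (h t1) + integral {q..b2} (h t1) = integral {p..b2} (h t1)"
    by (rule Henstock_Kurzweil_Integration.integral_combine) (use pq i in auto)
  then show ?thesis using Phi_interval[OF t1] pq by auto
qed

lemma fh_bnd:
  assumes t1: "t1 \<in> {a1..b1}" and t2: "t2 \<in> {a2..b2}"
  shows "\<bar>f1 t1 * h t1 t2\<bar> \<le> f1 t1 * (b2 * M) + M"
proof -
  have f: "0 < f1 t1" using f1_pos t1 by auto
  have e: "f1 t1 * h t1 t2 = f1 t1 * (t2 * f2 t1 t2) + (1 - F1 t1) * (D1F2 t1 t2 / f2 t1 t2 * f2 t1 t2)"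
    using f by (simp add: h_eq field_simps)
  have a: "\<bar>f1 t1 * (t2 * f2 t1 t2)\<bar> \<le> f1 t1 * (b2 * M)"
  proof -
    have "\<bar>t2 * f2 t1 t2\<bar> \<le> b2 * M"
      using M_bnd(1)[OF t1 t2] t2 a2_nonneg by (auto simp: abs_mult intro!: mult_mono)
    then show ?thesis using f by (auto simp: abs_mult intro!: mult_left_mono)
  qed
  have b: "\<bar>(1 - F1 t1) * (D1F2 t1 t2 / f2 t1 t2 * f2 t1 t2)\<bar> \<le> M"
  proof -
    have "\<bar>(1 - F1 t1) * (D1F2 t1 t2 / f2 t1 t2 * f2 t1 t2)\<bar> \<le> 1 * \<bar>D1F2 t1 t2 / f2 t1 t2 * f2 t1 t2\<bar>"
      unfolding abs_mult using F1_bounds[OF t1] by (intro mult_right_mono) auto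
    then show ?thesis using Dq_abs[of t1 t2] M_bnd(2)[OF t1 t2] by linarith
  qed
  show ?thesis unfolding e by (rule order_trans[OF abs_triangle_ineq add_mono[OF a b]])
qed

lemma W_lip_le:
  assumes t1: "t1 \<in> {a1..b1}" and pq: "a2 \<le> p" "p \<le> q" "q \<le> b2"
  shows "\<bar>W t1 p - W t1 q\<bar> \<le> \<bar>p - q\<bar> * (f1 t1 * (b2 * M) + M)"
proof -
  have i: "h t1 integrable_on {p..q}"
    by (rule integrable_on_subinterval[OF h_int[OF t1]]) (use pq in auto)
  have "W t1 p - W t1 q = f1 t1 * integral {p..q} (h t1)"
    unfolding W_def using Phi_diff[OF assms] by (simp add: algebra_simps)
  also have "\<dots> = integral {p..q} (\<lambda>t2. f1 t1 * h t1 t2)"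
    by (rule integral_mult[OF i])
  finally have e: "W t1 p - W t1 q = integral {p..q} (\<lambda>t2. f1 t1 * h t1 t2)" .
  have "norm (integral {p..q} (\<lambda>t2. f1 t1 * h t1 t2)) \<le> (f1 t1 * (b2 * M) + M) * Henstock_Kurzweil_Integration.content {p..q}"
  proof (rule has_integral_bound_real[where S="{}"])
    show "0 \<le> f1 t1 * (b2 * M) + M"
      using f1_nn[OF t1] M_nonneg a2_nonneg a2b2 by (intro add_nonneg_nonneg mult_nonneg_nonneg) auto
    show "((\<lambda>t2. f1 t1 * h t1 t2) has_integral integral {p..q} (\<lambda>t2. f1 t1 * h t1 t2)) {p..q}"
      using i by (intro integrable_integral integrable_on_mult_right)
    fix x assume "x \<in> {p..q} - {}"
    then show "norm (f1 t1 * h t1 x) \<le> f1 t1 * (b2 * M) + M" using fh_bnd[OF t1, of x] pq by auto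
  qed auto
  then show ?thesis using e pq by (simp add: mult.commute)
qed

lemma W_lip:
  assumes t1: "t1 \<in> {a1..b1}" and p: "p \<in> {a2..b2}" and q: "q \<in> {a2..b2}"
  shows "\<bar>W t1 p - W t1 q\<bar> \<le> \<bar>p - q\<bar> * (f1 t1 * (b2 * M) + M)"
proof (cases "p \<le> q")
  case True then show ?thesis using W_lip_le[OF t1] p q by auto
next
  case False then show ?thesis using W_lip_le[OF t1, of q p] p q by (auto simp: abs_minus_commute)
qed

lemma f2a1_cont: "continuous_on {a2..b2} (f2 a1)"
proof -
  have c: "continuous_on {a2..b2} (\<lambda>t2. (a1, t2))" by (intro continuous_intros)
  have sub: "(\<lambda>t2. (a1, t2)) ` {a2..b2} \<subseteq> {a1..b1} \<times> {a2..b2}" using a1b1 by auto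
  show ?thesis using continuous_on_compose2[OF f2_cont c sub] by simp
qed


lemma Hint_int: "(\<lambda>t2. max (t2 - p) 0 * f2 a1 t2) integrable_on {a2..b2}"
  by (intro integrable_continuous_interval continuous_intros f2a1_cont)

lemma H_lip: "\<bar>H p - H q\<bar> \<le> \<bar>p - q\<bar> * (M * (b2 - a2))"
proof -
  have "H p - H q = integral {a2..b2} (\<lambda>t2. max (t2 - p) 0 * f2 a1 t2 - max (t2 - q) 0 * f2 a1 t2)"
    unfolding H_def cond_expect_at_def by (rule integral_diff[symmetric]) (rule Hint_int)+
  also have "norm \<dots> \<le> (\<bar>p - q\<bar> * M) * (b2 - a2)"
  proof (rule integral_bound)
    show "a2 \<le> b2" using a2b2 by simp
    show "continuous_on {a2..b2} (\<lambda>t2. max (t2 - p) 0 * f2 a1 t2 - max (t2 - q) 0 * f2 a1 t2)"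
      by (intro continuous_intros f2a1_cont)
    fix t assume t: "t \<in> {a2..b2}"
    have "\<bar>max (t - p) 0 - max (t - q) 0\<bar> \<le> \<bar>p - q\<bar>" by (simp add: max_def abs_if)
    moreover have "\<bar>f2 a1 t\<bar> \<le> M" using M_bnd(1)[OF _ t] a1b1 by auto
    ultimately have "\<bar>max (t - p) 0 - max (t - q) 0\<bar> * \<bar>f2 a1 t\<bar> \<le> \<bar>p - q\<bar> * M"
      by (intro mult_mono) auto
    then show "norm (max (t - p) 0 * f2 a1 t - max (t - q) 0 * f2 a1 t) \<le> \<bar>p - q\<bar> * M"
      by (simp add: left_diff_distrib[symmetric] abs_mult)
  qed
  finally show ?thesis by (simp add: mult.assoc)
qed

definition "L = integral {a1..b1} (\<lambda>t1. f1 t1 * (b2 * M) + M)"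

lemma Dv_lip: "p \<in> {a2..b2} \<Longrightarrow> q \<in> {a2..b2} \<Longrightarrow> \<bar>Dv p - Dv q\<bar> \<le> (L + M * (b2 - a2)) * \<bar>p - q\<bar>"
proof -
  assume p: "p \<in> {a2..b2}" and q: "q \<in> {a2..b2}"
  have bi: "(\<lambda>t1. f1 t1 * (b2 * M) + M) integrable_on {a1..b1}"
    by (intro integrable_add integrable_on_mult_left f1_int integrable_const_ivl)
  have bi2: "(\<lambda>t1. \<bar>p - q\<bar> * (f1 t1 * (b2 * M) + M)) integrable_on {a1..b1}"
    by (rule integrable_on_mult_right[OF bi])
  have di: "(\<lambda>t1. W t1 p - W t1 q) integrable_on {a1..b1}"
    by (rule integrable_diff[OF W_int W_int])
  have e1: "integral {a1..b1} (\<lambda>t1. W t1 p) - integral {a1..b1} (\<lambda>t1. W t1 q) = integral {a1..b1} (\<lambda>t1. W t1 p - W t1 q)"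
    by (rule integral_diff[symmetric]) (rule W_int)+
  have n: "norm (integral {a1..b1} (\<lambda>t1. W t1 p - W t1 q)) \<le> integral {a1..b1} (\<lambda>t1. \<bar>p - q\<bar> * (f1 t1 * (b2 * M) + M))"
  proof (rule Henstock_Kurzweil_Integration.integral_norm_bound_integral[OF di bi2])
    fix x assume "x \<in> {a1..b1}"
    then show "norm (W x p - W x q) \<le> \<bar>p - q\<bar> * (f1 x * (b2 * M) + M)"
      using W_lip[OF _ p q] by simp
  qed
  have e2: "integral {a1..b1} (\<lambda>t1. \<bar>p - q\<bar> * (f1 t1 * (b2 * M) + M)) = \<bar>p - q\<bar> * L"
    unfolding L_def by (rule integral_mult[OF bi, symmetric])
  have a: "\<bar>integral {a1..b1} (\<lambda>t1. W t1 p) - integral {a1..b1} (\<lambda>t1. W t1 q)\<bar> \<le> \<bar>p - q\<bar> * L"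
    using n unfolding e1 e2 real_norm_def .
  have "Dv p - Dv q = (integral {a1..b1} (\<lambda>t1. W t1 p) - integral {a1..b1} (\<lambda>t1. W t1 q)) - (H p - H q)"
    by (simp add: Dv_def)
  then have "\<bar>Dv p - Dv q\<bar> \<le> \<bar>integral {a1..b1} (\<lambda>t1. W t1 p) - integral {a1..b1} (\<lambda>t1. W t1 q)\<bar> + \<bar>H p - H q\<bar>"
    by (metis abs_triangle_ineq4)
  moreover have "(L + M * (b2 - a2)) * \<bar>p - q\<bar> = \<bar>p - q\<bar> * L + \<bar>p - q\<bar> * (M * (b2 - a2))"
    by (simp add: algebra_simps)
  ultimately show ?thesis using a H_lip[of p q] by linarith
qed


lemma L_nonneg: "0 \<le> L"
  unfolding L_def using f1_nn M_nonneg a2_nonneg a2b2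
  by (intro integral_nonneg integrable_add integrable_on_mult_left f1_int integrable_const_ivl add_nonneg_nonneg mult_nonneg_nonneg) auto

lemma Dv_cont: "continuous_on {a2..b2} Dv"
proof (rule lipschitz_on_continuous_on[where L="L + M * (b2 - a2)"], rule lipschitz_onI)
  show "0 \<le> L + M * (b2 - a2)" using L_nonneg M_nonneg a2b2 by simp
  fix x y assume "x \<in> {a2..b2}" "y \<in> {a2..b2}"
  then show "dist (Dv x) (Dv y) \<le> (L + M * (b2 - a2)) * dist x y"
    using Dv_lip by (simp add: dist_real_def)
qed


lemma obj_eq: "objective f1 D1F2 f2 a1 b1 a2 b2 k pA pR = integral {a1..b1} (\<lambda>t1. if k \<le> t1 then W t1 pA else W t1 pR) - H pR"
proof -
  have "integral {a2..b2} (\<lambda>t2. vvalue f1 a1 D1F2 f2 t1 t2 *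
          ((if k \<le> t1 then 1 else 0) * (if pA \<le> t2 then 1 else 0)
           + (if t1 < k then 1 else 0) * (if pR \<le> t2 then 1 else 0)) * f2 t1 t2) * f1 t1
        = (if k \<le> t1 then W t1 pA else W t1 pR)" for t1
  proof (cases "k \<le> t1")
    case True
    then have "(\<lambda>t2. vvalue f1 a1 D1F2 f2 t1 t2 *
          ((if k \<le> t1 then 1 else 0) * (if pA \<le> t2 then 1 else 0)
           + (if t1 < k then 1 else 0) * (if pR \<le> t2 then 1 else 0)) * f2 t1 t2) = (\<lambda>t2. indicator {pA..} t2 * h t1 t2)"
      by (auto simp: h_def psi_def indicator_def)
    then show ?thesis using True by (simp add: W_def Phi_def)
  next
    case False
    then have "(\<lambda>t2. vvalue f1 a1 D1F2 f2 t1 t2 *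
          ((if k \<le> t1 then 1 else 0) * (if pA \<le> t2 then 1 else 0)
           + (if t1 < k then 1 else 0) * (if pR \<le> t2 then 1 else 0)) * f2 t1 t2) = (\<lambda>t2. indicator {pR..} t2 * h t1 t2)"
      by (auto simp: h_def psi_def indicator_def)
    then show ?thesis using False by (simp add: W_def Phi_def)
  qed
  then show ?thesis unfolding objective_def expect_def H_def by simp
qed

lemma main_ineq:
  assumes pRA: "pR \<le> pA"
  shows "\<exists>\<tau>'\<in>{a2..b2}. objective f1 D1F2 f2 a1 b1 a2 b2 k pA pR \<le> Dv \<tau>'"
proof -
  define S where "S = {t \<in> {a2..b2}. pR \<le> t \<and> t < pA \<and> (\<exists>t1\<in>{k..b1}. psi t1 t < 0)}"
  define \<tau> where "\<tau> = (if S = {} then pR else Sup S)"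
  define \<tau>' where "\<tau>' = max a2 (min \<tau> b2)"
  have bdd: "bdd_above S" unfolding S_def by (rule bdd_aboveI[of _ b2]) auto
  have \<tau>_ge: "pR \<le> \<tau>"
  proof (cases "S = {}")
    case False
    then obtain s where s: "s \<in> S" by auto
    then have "s \<le> Sup S" using bdd by (rule cSup_upper)
    moreover have "pR \<le> s" using s by (simp add: S_def)
    ultimately show ?thesis using False by (simp add: \<tau>_def)
  qed (simp add: \<tau>_def)
  have \<tau>_le: "\<tau> \<le> pA"
  proof (cases "S = {}")
    case False
    have "Sup S \<le> pA" by (rule cSup_least[OF False]) (auto simp: S_def)
    then show ?thesis using False by (simp add: \<tau>_def)
  qed (simp add: \<tau>_def pRA)
  have A: "0 \<le> psi t1 t2" if t1: "t1 \<in> {k..b1}" and t2: "t2 \<in> {a2..b2}" and lt: "\<tau> < t2" "t2 < pA" for t1 t2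
  proof (rule ccontr)
    assume "\<not> 0 \<le> psi t1 t2"
    then have neg: "psi t1 t2 < 0" by simp
    have "pR \<le> t2" using lt \<tau>_ge by simp
    then have "t2 \<in> S" using t1 t2 lt neg unfolding S_def by blast
    then have "S \<noteq> {}" "t2 \<le> Sup S" using bdd by (auto intro: cSup_upper)
    then show False using lt by (simp add: \<tau>_def)
  qed
  have B: "psi t1 t2 \<le> 0" if t1: "t1 \<in> {a1..b1}" "t1 < k" and t2: "t2 \<in> {a2..b2}" and lt: "pR \<le> t2" "t2 < \<tau>" for t1 t2
  proof -
    have ne: "S \<noteq> {}" using lt by (auto simp: \<tau>_def)
    then have "t2 < Sup S" using lt by (simp add: \<tau>_def)
    then obtain s where s: "s \<in> S" "t2 < s" using less_cSup_iff[OF ne bdd] by auto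
    then obtain t1' where t1': "t1' \<in> {k..b1}" "psi t1' s < 0" and sI: "s \<in> {a2..b2}" unfolding S_def by auto
    have t1'I: "t1' \<in> {a1..b1}" using t1' k_range by auto
    have "psi t1 t2 \<le> psi t1 s" using A3_mono2 t1 t2 sI s(2) unfolding psi_def by auto
    also have "\<dots> \<le> psi t1' s" using A3_mono1 t1 t1'I sI t1' unfolding psi_def by auto
    finally show ?thesis using t1' by simp
  qed
  have \<tau>'_in: "\<tau>' \<in> {a2..b2}" using a2b2 by (auto simp: \<tau>'_def)
  have ptw: "indicator {(if k \<le> t1 then pA else pR)..} t2 * h t1 t2 \<le> indicator {\<tau>'..} t2 * h t1 t2"
    if t1: "t1 \<in> {a1..b1}" and t2: "t2 \<in> {a2..b2}" and ne: "t2 \<noteq> \<tau>'" for t1 t2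
  proof (cases "k \<le> t1")
    case True
    have f: "0 \<le> f2 t1 t2" using f2_nonneg t1 t2 by auto
    have c1: "0 \<le> h t1 t2" if "\<tau>' < t2" "t2 < pA"
    proof -
      have "\<tau> < t2" using that t2 by (auto simp: \<tau>'_def max_def min_def split: if_splits)
      then have "0 \<le> psi t1 t2" using A[of t1 t2] True t1 t2 that by auto
      then show ?thesis using f by (simp add: h_def)
    qed
    have c2: "\<tau>' \<le> t2" if "pA \<le> t2" using that t2 \<tau>_le by (auto simp: \<tau>'_def max_def min_def)
    show ?thesis using True c1 c2 ne by (auto simp: indicator_def)
  next
    case False
    have f: "0 \<le> f2 t1 t2" using f2_nonneg t1 t2 by auto
    have c1: "h t1 t2 \<le> 0" if "pR \<le> t2" "t2 < \<tau>'"
    proof -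
      have "t2 < \<tau>" using that t2 by (auto simp: \<tau>'_def max_def min_def split: if_splits)
      then have "psi t1 t2 \<le> 0" using B[of t1 t2] False t1 t2 that by auto
      then show ?thesis using f by (simp add: h_def mult_nonpos_nonneg)
    qed
    have c2: False if "t2 < pR" "\<tau>' < t2"
    proof -
      have "\<tau> < t2" using that t2 by (auto simp: \<tau>'_def max_def min_def split: if_splits)
      then show False using that \<tau>_ge by simp
    qed
    show ?thesis using False c1 c2 ne by (auto simp: indicator_def)
  qed
  have Phi_le: "Phi t1 (if k \<le> t1 then pA else pR) \<le> Phi t1 \<tau>'" if t1: "t1 \<in> {a1..b1}" for t1
  proof -
    define pX where "pX = (if k \<le> t1 then pA else pR)"
    define g' where "g' = (\<lambda>t2. if t2 = \<tau>' then indicator {\<tau>'..} t2 * h t1 t2 else indicator {pX..} t2 * h t1 t2)"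
    have "Phi t1 pX = integral {a2..b2} g'"
      unfolding Phi_def by (rule integral_spike[where S="{\<tau>'}"]) (auto simp: g'_def)
    also have "\<dots> \<le> Phi t1 \<tau>'"
      unfolding Phi_def
    proof (rule integral_le)
      show "g' integrable_on {a2..b2}"
        by (rule integrable_spike[OF Phi_int[OF t1, of pX], where S="{\<tau>'}"]) (auto simp: g'_def)
      show "(\<lambda>t2. indicator {\<tau>'..} t2 * h t1 t2) integrable_on {a2..b2}" by (rule Phi_int[OF t1])
      fix x assume "x \<in> {a2..b2}"
      then show "g' x \<le> indicator {\<tau>'..} x * h t1 x"
        using ptw[OF t1, of x] by (auto simp: g'_def pX_def)
    qed
    finally show ?thesis by (simp add: pX_def)
  qed
  have V_le: "(if k \<le> t1 then W t1 pA else W t1 pR) \<le> W t1 \<tau>'" if t1: "t1 \<in> {a1..b1}" for t1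
  proof -
    have "(if k \<le> t1 then W t1 pA else W t1 pR) = Phi t1 (if k \<le> t1 then pA else pR) * f1 t1"
      by (simp add: W_def)
    also have "\<dots> \<le> Phi t1 \<tau>' * f1 t1"
      by (rule mult_right_mono[OF Phi_le[OF t1] f1_nn[OF t1]])
    finally show ?thesis by (simp add: W_def)
  qed
  have int_le: "integral {a1..b1} (\<lambda>t1. if k \<le> t1 then W t1 pA else W t1 pR) \<le> integral {a1..b1} (\<lambda>t1. W t1 \<tau>')"
    by (rule integral_le[OF V_int W_int V_le])
  have H_le: "H \<tau>' \<le> H pR"
    unfolding H_def cond_expect_at_def
  proof (rule integral_le[OF Hint_int Hint_int])
    fix t2 assume t2: "t2 \<in> {a2..b2}"
    have f: "0 \<le> f2 a1 t2" using f2_nonneg t2 a1b1 by auto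
    have "max (t2 - \<tau>') 0 \<le> max (t2 - pR) 0"
      using t2 \<tau>_ge by (auto simp: \<tau>'_def max_def min_def)
    then show "max (t2 - \<tau>') 0 * f2 a1 t2 \<le> max (t2 - pR) 0 * f2 a1 t2"
      by (rule mult_right_mono[OF _ f])
  qed
  have "objective f1 D1F2 f2 a1 b1 a2 b2 k pA pR \<le> Dv \<tau>'"
    unfolding obj_eq Dv_def using int_le H_le by linarith
  then show ?thesis using \<tau>'_in by blast
qed

lemma main: "\<exists>p. \<forall>pA pR. pR \<le> pA \<longrightarrow>
           objective f1 D1F2 f2 a1 b1 a2 b2 k pA pR \<le> objective f1 D1F2 f2 a1 b1 a2 b2 k p p"
proof -
  obtain ps where ps: "ps \<in> {a2..b2}" "\<forall>y\<in>{a2..b2}. Dv y \<le> Dv ps"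
    using continuous_attains_sup[OF compact_Icc _ Dv_cont] a2b2 by auto
  have e: "objective f1 D1F2 f2 a1 b1 a2 b2 k ps ps = Dv ps"
    unfolding obj_eq Dv_def by simp
  show ?thesis
  proof (intro exI allI impI)
    fix pA pR :: real assume "pR \<le> pA"
    then obtain t where "t \<in> {a2..b2}" "objective f1 D1F2 f2 a1 b1 a2 b2 k pA pR \<le> Dv t"
      using main_ineq by blast
    then show "objective f1 D1F2 f2 a1 b1 a2 b2 k pA pR \<le> objective f1 D1F2 f2 a1 b1 a2 b2 k ps ps"
      using ps e by force
  qed
qed

end

theorem claim1:
  fixes a1 b1 a2 b2 k :: real
    and f1 :: "real \<Rightarrow> real"
    and F2 D1F2 f2 :: "real \<Rightarrow> real \<Rightarrow> real"
  assumes a1_nonneg: "0 \<le> a1" and a1b1: "a1 < b1"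
    and a2_nonneg: "0 \<le> a2" and a2b2: "a2 < b2"
    and f1_pos: "\<forall>t\<in>{a1..b1}. 0 < f1 t"
    and f1_density: "(f1 has_integral 1) {a1..b1}"
    and F2_deriv: "\<forall>t1\<in>{a1..b1}. \<forall>t2\<in>{a2..b2}.
        ((\<lambda>(x, y). F2 x y) has_derivative (\<lambda>(h1, h2). D1F2 t1 t2 * h1 + f2 t1 t2 * h2))
          (at (t1, t2) within ({a1..b1} \<times> {a2..b2}))"
    and D1F2_cont: "continuous_on ({a1..b1} \<times> {a2..b2}) (\<lambda>(x, y). D1F2 x y)"
    and f2_cont: "continuous_on ({a1..b1} \<times> {a2..b2}) (\<lambda>(x, y). f2 x y)"
    and f2_nonneg: "\<forall>t1\<in>{a1..b1}. \<forall>t2\<in>{a2..b2}. 0 \<le> f2 t1 t2"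
    and F2_low: "\<forall>t1\<in>{a1..b1}. F2 t1 a2 = 0"
    and F2_high: "\<forall>t1\<in>{a1..b1}. F2 t1 b2 = 1"
    and A3_mono1: "\<forall>t1\<in>{a1..b1}. \<forall>t1'\<in>{a1..b1}. \<forall>t2\<in>{a2..b2}.
        t1 \<le> t1' \<longrightarrow> vvalue f1 a1 D1F2 f2 t1 t2 \<le> vvalue f1 a1 D1F2 f2 t1' t2"
    and A3_mono2: "\<forall>t1\<in>{a1..b1}. \<forall>t2\<in>{a2..b2}. \<forall>t2'\<in>{a2..b2}.
        t2 \<le> t2' \<longrightarrow> vvalue f1 a1 D1F2 f2 t1 t2 \<le> vvalue f1 a1 D1F2 f2 t1 t2'"
    and k_range: "k \<in> {a1..b1}"
  shows "\<exists>p::real. \<forall>pA pR::real. pR \<le> pA \<longrightarrow>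
           objective f1 D1F2 f2 a1 b1 a2 b2 k pA pR \<le> objective f1 D1F2 f2 a1 b1 a2 b2 k p p"
  proof -
  have "cfg a1 b1 a2 b2 k f1 D1F2 f2"
    unfolding cfg_def using a1b1 a2_nonneg a2b2 f1_pos f1_density D1F2_cont f2_cont f2_nonneg
      A3_mono1 A3_mono2 k_range by blast
  then show ?thesis by (rule cfg.main)
qed

end
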